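(* For every nonzero function $f:\mathbb{F}_2^n\to\mathbb{C}$ and every Lagrangian subspace $L\le\mathbb{F}_2^{2n}$, $$P_f(L)\le\max_{\phi:\ \mathcal{L}(\phi)=L}\Big(\frac{|\langle f,\phi\rangle|}{\|f\|_2}\Big)^2,$$ the maximum being over stabilizer states $\phi$ with $\mathcal{L}(\phi)=L$.
   Context: $\langle f,g\rangle=\mathbb{E}_xf(x)\overline{g(x)}$, $\|f\|_2=\langle f,f\rangle^{1/2}$, $\Delta_af(x)=f(x+a)\overline{f(x)}$, $\hat g(b)=\mathbb{E}_xg(x)(-1)^{b\cdot x}$, $\|f\|_{U^3}=(\mathbb{E}_{x,a,b,c}\Delta_a\Delta_b\Delta_cf(x))^{1/8}$. A Lagrangian subspace of $\mathbb{F}_2^{2n}$ is a maximal isotropic subspace for $[(a,b),(c,d)]=a\cdot d+b\cdot c$. A stabilizer state is $\phi$ with $\|\phi\|_2=\|\phi\|_{U^3}=1$; $\mathcal{L}(\phi)$ is the unique Lagrangian with $|\widehat{\Delta_a\phi}(b)|=\mathbf{1}_{\mathcal{L}(\phi)}(a,b)$. $P_f(a,b)=|\widehat{\Delta_af}(b)|^2/(2^n\|f\|_2^4)$ and $P_f(L)=\sum_{(a,b)\in L}P_f(a,b)$. *)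

theory Defs
  imports "HOL-Analysis.Analysis"
begin

text \<open>Vectors of F_2^n are modelled as functions 'n => bool on a finite index
type 'n with CARD('n) = n; True = 1, False = 0.\<close>

type_synonym 'n f2vec = "'n \<Rightarrow> bool"

definition vadd :: "'n f2vec \<Rightarrow> 'n f2vec \<Rightarrow> 'n f2vec" where
  "vadd x y = (\<lambda>i. x i \<noteq> y i)"

definition vzero :: "'n f2vec" where
  "vzero = (\<lambda>i. False)"

definition vdot :: "('n::finite) f2vec \<Rightarrow> 'n f2vec \<Rightarrow> bool" where
  "vdot x y = odd (card {i. x i \<and> y i})"

definition chr :: "('n::finite) f2vec \<Rightarrow> 'n f2vec \<Rightarrow> complex" where
  "chr b x = (if vdot b x then -1 else 1)"

definition Ex :: "(('n::finite) f2vec \<Rightarrow> complex) \<Rightarrow> complex" where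
  "Ex g = (\<Sum>x\<in>UNIV. g x) / of_nat (CARD('n f2vec))"

definition ip :: "(('n::finite) f2vec \<Rightarrow> complex) \<Rightarrow> ('n f2vec \<Rightarrow> complex) \<Rightarrow> complex" where
  "ip f g = Ex (\<lambda>x. f x * cnj (g x))"

definition norm2 :: "(('n::finite) f2vec \<Rightarrow> complex) \<Rightarrow> real" where
  "norm2 f = sqrt (Re (ip f f))"

definition Delta :: "'n f2vec \<Rightarrow> ('n f2vec \<Rightarrow> complex) \<Rightarrow> 'n f2vec \<Rightarrow> complex" where
  "Delta a f x = f (vadd x a) * cnj (f x)"

definition fhat :: "(('n::finite) f2vec \<Rightarrow> complex) \<Rightarrow> 'n f2vec \<Rightarrow> complex" where
  "fhat g b = Ex (\<lambda>x. g x * chr b x)"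

text \<open>Gowers U^3 norm: (E_{x,a,b,c} Delta_a Delta_b Delta_c f(x))^(1/8); the
average is a nonnegative real, so we take its real part.\<close>
definition U3 :: "(('n::finite) f2vec \<Rightarrow> complex) \<Rightarrow> real" where
  "U3 f = (Re (Ex (\<lambda>x. Ex (\<lambda>a. Ex (\<lambda>b. Ex (\<lambda>c.
              Delta a (Delta b (Delta c f)) x)))))) powr (1/8)"

definition stabilizer_state :: "(('n::finite) f2vec \<Rightarrow> complex) \<Rightarrow> bool" where
  "stabilizer_state \<phi> \<longleftrightarrow> norm2 \<phi> = 1 \<and> U3 \<phi> = 1"

definition sympl :: "('n::finite) f2vec \<times> 'n f2vec \<Rightarrow> 'n f2vec \<times> 'n f2vec \<Rightarrow> bool" where
  "sympl u v = (vdot (fst u) (snd v) \<noteq> vdot (snd u) (fst v))"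

definition f2_subspace :: "('n f2vec \<times> 'n f2vec) set \<Rightarrow> bool" where
  "f2_subspace L \<longleftrightarrow> (vzero, vzero) \<in> L \<and>
     (\<forall>u\<in>L. \<forall>v\<in>L. (vadd (fst u) (fst v), vadd (snd u) (snd v)) \<in> L)"

definition isotropic :: "(('n::finite) f2vec \<times> 'n f2vec) set \<Rightarrow> bool" where
  "isotropic L \<longleftrightarrow> f2_subspace L \<and> (\<forall>u\<in>L. \<forall>v\<in>L. \<not> sympl u v)"

definition lagrangian :: "(('n::finite) f2vec \<times> 'n f2vec) set \<Rightarrow> bool" where
  "lagrangian L \<longleftrightarrow> isotropic L \<and> (\<forall>M. isotropic M \<and> L \<subseteq> M \<longrightarrow> M = L)"

definition stabLag :: "(('n::finite) f2vec \<Rightarrow> complex) \<Rightarrow> ('n f2vec \<times> 'n f2vec) set" where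
  "stabLag \<phi> = (THE L. lagrangian L \<and>
      (\<forall>a b. cmod (fhat (Delta a \<phi>) b) = (if (a, b) \<in> L then 1 else 0)))"

definition Pf :: "(('n::finite) f2vec \<Rightarrow> complex) \<Rightarrow> 'n f2vec \<Rightarrow> 'n f2vec \<Rightarrow> real" where
  "Pf f a b = (cmod (fhat (Delta a f) b))^2 / (2 ^ CARD('n) * (norm2 f)^4)"

definition PfL :: "(('n::finite) f2vec \<Rightarrow> complex) \<Rightarrow> ('n f2vec \<times> 'n f2vec) set \<Rightarrow> real" where
  "PfL f L = (\<Sum>(a, b)\<in>L. Pf f a b)"

end

theory Submission
  imports Defs "HOL-Library.Cardinality"
begin

lemma vadd_comm: "vadd x y = vadd y x" unfolding vadd_def by auto
lemma vadd_assoc: "vadd (vadd x y) z = vadd x (vadd y z)" unfolding vadd_def by (rule ext) auto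
lemma vadd_lcomm: "vadd x (vadd y z) = vadd y (vadd x z)" unfolding vadd_def by (rule ext) auto
lemmas vadd_ac = vadd_assoc vadd_comm vadd_lcomm
lemma vadd_zero[simp]: "vadd x vzero = x" "vadd vzero x = x" unfolding vadd_def vzero_def by auto
lemma vadd_self[simp]: "vadd x x = vzero" unfolding vadd_def vzero_def by auto
lemma vadd_cancel[simp]: "vadd (vadd x a) a = x" unfolding vadd_def by auto
lemma vadd_cancel2[simp]: "vadd a (vadd a x) = x" unfolding vadd_def by auto
lemma vadd_eq_zero_iff: "vadd x y = vzero \<longleftrightarrow> x = y"
  unfolding vadd_def vzero_def by (auto simp: fun_eq_iff)

lemma sum_shift:
  fixes g :: "('n::finite) f2vec \<Rightarrow> 'b::comm_monoid_add"
  shows "(\<Sum>x\<in>UNIV. g (vadd x a)) = (\<Sum>x\<in>UNIV. g x)"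
  by (rule sum.reindex_bij_witness[where i="\<lambda>x. vadd x a" and j="\<lambda>x. vadd x a"]) auto

lemma card_vec: "CARD(('n::finite) f2vec) = 2 ^ CARD('n)"
  by (simp add: card_fun)

lemma vdot_comm: "vdot x y = vdot y x" unfolding vdot_def by (simp add: conj_commute)

lemma vdot_add_left: "vdot (vadd x y) (z::('n::finite) f2vec) = (vdot x z \<noteq> vdot y z)"
proof -
  define X where "X = {i. x i \<and> z i}"
  define Y where "Y = {i. y i \<and> z i}"
  have fX: "finite X" "finite Y" by auto
  have e: "{i. vadd x y i \<and> z i} = (X \<union> Y) - (X \<inter> Y)"
    unfolding X_def Y_def vadd_def by auto
  have c1: "card ((X \<union> Y) - (X \<inter> Y)) = card (X \<union> Y) - card (X \<inter> Y)"
    by (rule card_Diff_subset) (auto simp: fX)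
  have c2: "card (X \<union> Y) + card (X \<inter> Y) = card X + card Y"
    using card_Un_Int[OF fX] by simp
  have c3: "card (X \<inter> Y) \<le> card (X \<union> Y)" by (rule card_mono) (auto simp: fX)
  have "odd (card ((X \<union> Y) - (X \<inter> Y))) = (odd (card X) \<noteq> odd (card Y))"
  proof -
    have e2: "card ((X \<union> Y) - (X \<inter> Y)) + 2 * card (X \<inter> Y) = card X + card Y"
      using c1 c2 c3 by linarith
    show ?thesis using e2 by presburger
  qed
  then show ?thesis unfolding vdot_def e X_def Y_def by simp
qed

lemma vdot_add_right: "vdot z (vadd x y) = (vdot z x \<noteq> vdot z y)"
  using vdot_add_left[of x y z] by (simp add: vdot_comm)

lemma vdot_zero[simp]: "vdot vzero x = False" "vdot x vzero = False"
  unfolding vdot_def vzero_def by auto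

lemma chr_vals: "chr b x = 1 \<or> chr b x = -1" unfolding chr_def by auto
lemma chr_sq[simp]: "chr b x * chr b x = 1" unfolding chr_def by auto
lemma chr_sq2[simp]: "chr b x * (chr b x * z) = (z::complex)" by (simp add: mult.assoc[symmetric])
lemma chr_cnj[simp]: "cnj (chr b x) = chr b x" unfolding chr_def by auto
lemma chr_comm: "chr b x = chr x b" unfolding chr_def by (simp add: vdot_comm)
lemma chr_add2: "chr b (vadd x y) = chr b x * chr b y"
  unfolding chr_def by (auto simp: vdot_add_right)
lemma chr_add1: "chr (vadd b c) x = chr b x * chr c x"
  unfolding chr_def by (auto simp: vdot_add_left)
lemma chr_zero[simp]: "chr vzero x = 1" "chr x vzero = 1" unfolding chr_def by auto
lemma cmod_chr[simp]: "cmod (chr b x) = 1" unfolding chr_def by auto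

definition unitv :: "('n::finite) f2vec" where "unitv i = True"

lemma chr_sum:
  "(\<Sum>b\<in>UNIV. chr b (z::('n::finite) f2vec)) = (if z = vzero then of_nat CARD('n f2vec) else 0)"
proof (cases "z = vzero")
  case True then show ?thesis by simp
next
  case False
  then obtain i where zi: "z i" unfolding vzero_def by auto
  define e :: "'n f2vec" where "e = (\<lambda>j. j = i)"
  have "{j. e j \<and> z j} = {i}" unfolding e_def using zi by auto
  then have ve: "vdot e z" unfolding vdot_def by simp
  have "(\<Sum>b\<in>UNIV. chr b z) = (\<Sum>b\<in>UNIV. chr (vadd b e) z)" by (rule sum_shift[symmetric])
  also have "\<dots> = (\<Sum>b\<in>UNIV. - chr b z)"
  proof (rule sum.cong[OF refl])
    fix b show "chr (vadd b e) z = - chr b z" unfolding chr_add1 using ve unfolding chr_def by simp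
  qed
  also have "\<dots> = - (\<Sum>b\<in>UNIV. chr b z)" by (rule sum_negf)
  finally have "(\<Sum>b\<in>UNIV. chr b z) = 0" by simp
  then show ?thesis using False by simp
qed

lemma chr_orth:
  "(\<Sum>b\<in>UNIV. chr b x * chr b (y::('n::finite) f2vec)) = (if x = y then of_nat CARD('n f2vec) else 0)"
proof -
  have "(\<Sum>b\<in>UNIV. chr b x * chr b y) = (\<Sum>b\<in>UNIV. chr b (vadd x y))"
    by (simp only: chr_add2)
  then show ?thesis by (simp only: chr_sum vadd_eq_zero_iff)
qed


definition W :: "('n::finite) f2vec \<times> 'n f2vec \<Rightarrow> ('n f2vec \<Rightarrow> complex) \<Rightarrow> 'n f2vec \<Rightarrow> complex" where
  "W u h x = h (vadd x (fst u)) * chr (snd u) x"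

definition sp :: "(('n::finite) f2vec \<Rightarrow> complex) \<Rightarrow> ('n f2vec \<Rightarrow> complex) \<Rightarrow> complex" where
  "sp g h = (\<Sum>x\<in>UNIV. g x * cnj (h x))"

definition padd :: "'n f2vec \<times> 'n f2vec \<Rightarrow> 'n f2vec \<times> 'n f2vec \<Rightarrow> 'n f2vec \<times> 'n f2vec" where
  "padd u v = (vadd (fst u) (fst v), vadd (snd u) (snd v))"

lemma ip_sp: "ip g h = sp g h / of_nat CARD(('n::finite) f2vec)"
  for g :: "('n::finite) f2vec \<Rightarrow> complex"
  unfolding ip_def Ex_def sp_def by simp

lemma parseval:
  fixes F G :: "('n::finite) f2vec \<Rightarrow> complex"
  shows "(\<Sum>b\<in>UNIV. (\<Sum>x\<in>UNIV. F x * chr b x) * cnj (\<Sum>y\<in>UNIV. G y * chr b y))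
         = of_nat CARD('n f2vec) * (\<Sum>x\<in>UNIV. F x * cnj (G x))"
proof -
  have "(\<Sum>b\<in>UNIV. (\<Sum>x\<in>UNIV. F x * chr b x) * cnj (\<Sum>y\<in>UNIV. G y * chr b y))
      = (\<Sum>b\<in>UNIV. \<Sum>x\<in>UNIV. \<Sum>y\<in>UNIV. F x * chr b x * cnj (G y * chr b y))"
    by (simp only: cnj_sum sum_product)
  also have "\<dots> = (\<Sum>b\<in>UNIV. \<Sum>x\<in>UNIV. \<Sum>y\<in>UNIV. F x * cnj (G y) * (chr b x * chr b y))"
    by (simp add: mult_ac)
  also have "\<dots> = (\<Sum>x\<in>UNIV. \<Sum>b\<in>UNIV. \<Sum>y\<in>UNIV. F x * cnj (G y) * (chr b x * chr b y))"
    by (rule sum.swap)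
  also have "\<dots> = (\<Sum>x\<in>UNIV. \<Sum>y\<in>UNIV. \<Sum>b\<in>UNIV. F x * cnj (G y) * (chr b x * chr b y))"
    by (rule sum.cong[OF refl], rule sum.swap)
  also have "\<dots> = (\<Sum>x\<in>UNIV. \<Sum>y\<in>UNIV. F x * cnj (G y) * (if x = y then of_nat CARD('n f2vec) else 0))"
    by (simp add: sum_distrib_left[symmetric] chr_orth)
  also have "\<dots> = (\<Sum>x\<in>UNIV. F x * cnj (G x) * of_nat CARD('n f2vec))"
    by (simp add: if_distrib cong: if_cong)
  finally show ?thesis by (simp add: sum_distrib_left mult_ac)
qed

lemma polar_sp:
  fixes h1 h2 g1 g2 :: "('n::finite) f2vec \<Rightarrow> complex"
  shows "(\<Sum>u\<in>UNIV. sp (W u h1) h2 * cnj (sp (W u g1) g2))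
         = of_nat CARD('n f2vec) * sp h1 g1 * sp g2 h2"
proof -
  have U: "(UNIV :: ('n f2vec \<times> 'n f2vec) set) = UNIV \<times> UNIV" by simp
  have "(\<Sum>u\<in>UNIV. sp (W u h1) h2 * cnj (sp (W u g1) g2))
      = (\<Sum>a\<in>UNIV. \<Sum>b\<in>UNIV. sp (W (a,b) h1) h2 * cnj (sp (W (a,b) g1) g2))"
    unfolding U sum.cartesian_product by simp
  also have "\<dots> = (\<Sum>a\<in>UNIV. \<Sum>b\<in>UNIV.
        (\<Sum>x\<in>UNIV. (h1 (vadd x a) * cnj (h2 x)) * chr b x) *
        cnj (\<Sum>y\<in>UNIV. (g1 (vadd y a) * cnj (g2 y)) * chr b y))"
    unfolding sp_def W_def by (simp add: mult_ac)
  also have "\<dots> = (\<Sum>a\<in>UNIV. of_nat CARD('n f2vec) *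
        (\<Sum>x\<in>UNIV. (h1 (vadd x a) * cnj (h2 x)) * cnj (g1 (vadd x a) * cnj (g2 x))))"
    by (simp only: parseval)
  also have "\<dots> = of_nat CARD('n f2vec) * (\<Sum>a\<in>UNIV. \<Sum>x\<in>UNIV.
        (h1 (vadd x a) * cnj (h2 x)) * cnj (g1 (vadd x a) * cnj (g2 x)))"
    by (simp only: sum_distrib_left)
  also have "\<dots> = of_nat CARD('n f2vec) * (\<Sum>x\<in>UNIV. \<Sum>a\<in>UNIV.
        (h1 (vadd x a) * cnj (h2 x)) * cnj (g1 (vadd x a) * cnj (g2 x)))"
    by (subst sum.swap) (rule refl)
  also have "\<dots> = of_nat CARD('n f2vec) * (\<Sum>x\<in>UNIV. \<Sum>a\<in>UNIV.
        (h1 (vadd x a) * cnj (g1 (vadd x a))) * (g2 x * cnj (h2 x)))"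
    by (simp add: mult_ac)
  also have "\<dots> = of_nat CARD('n f2vec) * (\<Sum>x\<in>UNIV. sp h1 g1 * (g2 x * cnj (h2 x)))"
  proof -
    have "\<And>x. (\<Sum>a\<in>UNIV. h1 (vadd x a) * cnj (g1 (vadd x a))) = sp h1 g1"
      unfolding sp_def using sum_shift[of "\<lambda>y. h1 y * cnj (g1 y)"] by (simp add: vadd_comm)
    then show ?thesis by (simp add: sum_distrib_right[symmetric])
  qed
  also have "\<dots> = of_nat CARD('n f2vec) * sp h1 g1 * sp g2 h2"
    unfolding sum_distrib_left[symmetric] sp_def[of g2 h2] by (simp only: mult.assoc)
  finally show ?thesis .
qed

lemma polar:
  fixes h1 h2 g1 g2 :: "('n::finite) f2vec \<Rightarrow> complex"
  shows "(\<Sum>u\<in>UNIV. ip (W u h1) h2 * cnj (ip (W u g1) g2))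
         = of_nat CARD('n f2vec) * ip h1 g1 * ip g2 h2"
proof -
  define N where "N = (of_nat CARD('n f2vec) :: complex)"
  have N0: "N \<noteq> 0" unfolding N_def by simp
  have "(\<Sum>u\<in>UNIV. ip (W u h1) h2 * cnj (ip (W u g1) g2))
      = (\<Sum>u\<in>UNIV. sp (W u h1) h2 * cnj (sp (W u g1) g2)) / (N * N)"
    unfolding ip_sp N_def[symmetric] by (simp add: sum_divide_distrib N_def)
  also have "\<dots> = N * sp h1 g1 * sp g2 h2 / (N * N)" unfolding polar_sp N_def ..
  also have "\<dots> = N * ip h1 g1 * ip g2 h2" unfolding ip_sp N_def[symmetric] using N0
    by (simp add: field_simps)
  finally show ?thesis unfolding N_def .
qed

lemma padd_comm: "padd u v = padd v u" unfolding padd_def by (simp add: vadd_comm)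

lemma W_comp: "W u (W v h) x = chr (snd v) (fst u) * W (padd u v) h x"
  unfolding W_def padd_def by (simp add: chr_add2 chr_add1 vadd_assoc mult_ac)

lemma sympl_chr: "chr (snd v) (fst u) * chr (snd u) (fst v) = (if sympl u v then -1 else 1)"
  unfolding sympl_def chr_def by (auto simp: vdot_comm)

lemma W_commute: "W u (W v h) x = (if sympl u v then -1 else 1) * W v (W u h) x"
proof -
  have "W u (W v h) x = chr (snd v) (fst u) * W (padd u v) h x" by (rule W_comp)
  also have "\<dots> = chr (snd v) (fst u) * (chr (snd u) (fst v) * chr (snd u) (fst v)) * W (padd u v) h x"
    by simp
  also have "\<dots> = (if sympl u v then -1 else 1) * (chr (snd u) (fst v) * W (padd v u) h x)"
    by (simp only: sympl_chr[symmetric] padd_comm[of u v] mult_ac)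
  also have "\<dots> = (if sympl u v then -1 else 1) * W v (W u h) x" by (simp add: W_comp)
  finally show ?thesis .
qed

lemma W_commute_iso: "\<not> sympl u v \<Longrightarrow> W u (W v h) = W v (W u h)"
proof (rule ext)
  fix x assume "\<not> sympl u v"
  then show "W u (W v h) x = W v (W u h) x" using W_commute[of u v h x] by simp
qed

lemma W_sq: "W u (W u h) x = chr (snd u) (fst u) * h x"
proof -
  have "W u (W u h) x = h x * chr (snd u) (fst u) * (chr (snd u) x * chr (snd u) x)"
    unfolding W_def by (simp only: chr_add2 vadd_cancel mult_ac)
  then show ?thesis by simp
qed

lemma W_scale: "W u (\<lambda>x. k * h x) = (\<lambda>x. k * W u h x)"
  unfolding W_def by (simp add: mult_ac)
lemma W_add: "W u (\<lambda>x. g x + h x) = (\<lambda>x. W u g x + W u h x)"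
  unfolding W_def by (simp add: algebra_simps)
lemma W_diff: "W u (\<lambda>x. g x - h x) = (\<lambda>x. W u g x - W u h x)"
  unfolding W_def by (simp add: algebra_simps)
lemma W_zero[simp]: "W (vzero, vzero) h = h"
  unfolding W_def by (simp add: fun_eq_iff)

lemma sp_W_W: "sp (W u g) (W u h) = sp g h"
proof -
  have e: "\<And>b x z. chr b x * (chr b x * z) = (z::complex)" by (simp add: mult.assoc[symmetric])
  have "sp (W u g) (W u h) = (\<Sum>x\<in>UNIV. g (vadd x (fst u)) * cnj (h (vadd x (fst u))))"
    unfolding sp_def W_def by (simp add: mult_ac e)
  also have "\<dots> = sp g h" unfolding sp_def by (rule sum_shift)
  finally show ?thesis .
qed

lemma ip_W_W: "ip (W u g) (W u h) = ip g h"
  unfolding ip_sp sp_W_W ..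

lemma sp_scale1: "sp (\<lambda>x. k * g x) h = k * sp g h"
  unfolding sp_def by (simp add: sum_distrib_left mult_ac)
lemma sp_scale2: "sp g (\<lambda>x. k * h x) = cnj k * sp g h"
  unfolding sp_def by (simp add: sum_distrib_left mult_ac)
lemma ip_scale1: "ip (\<lambda>x. k * g x) h = k * ip g h"
  unfolding ip_sp sp_scale1 by simp
lemma ip_scale2: "ip g (\<lambda>x. k * h x) = cnj k * ip g h"
  unfolding ip_sp sp_scale2 by simp
lemma sp_cnj: "cnj (sp g h) = sp h g"
  unfolding sp_def by (simp add: mult_ac)
lemma ip_cnj: "cnj (ip g h) = ip h g"
  unfolding ip_sp by (simp add: sp_cnj)

lemma sp_self: "sp g g = of_real (\<Sum>x\<in>UNIV. (cmod (g x))^2)"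
  unfolding sp_def of_real_sum by (rule sum.cong[OF refl]) (rule complex_norm_square[symmetric])

lemma sp_self_eq0: "sp g g = 0 \<Longrightarrow> g = (\<lambda>x. 0)"
proof -
  assume "sp g g = 0"
  then have "complex_of_real (\<Sum>x\<in>UNIV. (cmod (g x))^2) = 0" unfolding sp_self by simp
  then have "(\<Sum>x\<in>UNIV. (cmod (g x))^2) = 0" by (simp only: of_real_eq_0_iff)
  then have "\<forall>x\<in>UNIV. (cmod (g x))^2 = 0" by (subst (asm) sum_nonneg_eq_0_iff) auto
  then show ?thesis by auto
qed

lemma ip_self_real: "ip g g = of_real (Re (ip g g))" and ip_self_nonneg: "Re (ip g g) \<ge> 0"
  unfolding ip_sp sp_self by (auto intro!: sum_nonneg simp: divide_simps)


lemma Delta_comm3: "Delta a (Delta b (Delta c f)) x = Delta b (Delta c (Delta a f)) x"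
  unfolding Delta_def by (simp add: vadd_ac mult_ac)

lemma Delta2: "Delta b (Delta c g) x =
   (g (vadd (vadd x b) c) * cnj (g (vadd x b))) * cnj (g (vadd x c) * cnj (g x))"
  unfolding Delta_def by simp

lemma fhat_Delta: "fhat (Delta a h) b = ip (W (a, b) h) h"
  unfolding fhat_def ip_def W_def Delta_def by (simp add: mult_ac)

lemma U2_sum:
  fixes g :: "('n::finite) f2vec \<Rightarrow> complex"
  shows "of_nat CARD('n f2vec) * (\<Sum>x\<in>UNIV. \<Sum>b\<in>UNIV. \<Sum>c\<in>UNIV. Delta b (Delta c g) x)
       = (\<Sum>\<xi>\<in>UNIV. of_real ((cmod (\<Sum>x\<in>UNIV. g x * chr \<xi> x)) ^ 4))"
proof -
  define A where "A c = (\<Sum>y\<in>UNIV. g (vadd y c) * cnj (g y))" for c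
  define G where "G \<xi> = (\<Sum>x\<in>UNIV. g x * chr \<xi> x)" for \<xi>
  have inner: "(\<Sum>x\<in>UNIV. \<Sum>b\<in>UNIV. Delta b (Delta c g) x) = A c * cnj (A c)" for c
  proof -
    define h where "h y = g (vadd y c) * cnj (g y)" for y
    have "(\<Sum>x\<in>UNIV. \<Sum>b\<in>UNIV. Delta b (Delta c g) x) = (\<Sum>x\<in>UNIV. \<Sum>b\<in>UNIV. h (vadd x b) * cnj (h x))"
      unfolding Delta2 h_def by simp
    also have "\<dots> = (\<Sum>x\<in>UNIV. cnj (h x) * (\<Sum>b\<in>UNIV. h (vadd x b)))"
      by (simp add: sum_distrib_left mult_ac)
    also have "\<dots> = (\<Sum>x\<in>UNIV. cnj (h x) * A c)"
    proof -
      have "\<And>x. (\<Sum>b\<in>UNIV. h (vadd x b)) = A c"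
        unfolding A_def h_def[symmetric] using sum_shift[of h] by (simp add: vadd_comm)
      then show ?thesis by simp
    qed
    also have "\<dots> = (\<Sum>x\<in>UNIV. cnj (h x)) * A c"
      by (simp add: sum_distrib_right)
    also have "(\<Sum>x\<in>UNIV. cnj (h x)) = cnj (A c)"
      unfolding A_def h_def by simp
    also have "cnj (A c) * A c = A c * cnj (A c)" by (rule mult.commute)
    finally show ?thesis .
  qed
  have sw: "(\<Sum>x\<in>UNIV. \<Sum>b\<in>UNIV. \<Sum>c\<in>UNIV. Delta b (Delta c g) x)
      = (\<Sum>c\<in>UNIV. \<Sum>x\<in>UNIV. \<Sum>b\<in>UNIV. Delta b (Delta c g) x)"
  proof -
    have "(\<Sum>x\<in>UNIV. \<Sum>b\<in>UNIV. \<Sum>c\<in>UNIV. Delta b (Delta c g) x)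
        = (\<Sum>x\<in>UNIV. \<Sum>c\<in>UNIV. \<Sum>b\<in>UNIV. Delta b (Delta c g) x)"
      by (rule sum.cong[OF refl], rule sum.swap)
    also have "\<dots> = (\<Sum>c\<in>UNIV. \<Sum>x\<in>UNIV. \<Sum>b\<in>UNIV. Delta b (Delta c g) x)"
      by (rule sum.swap)
    finally show ?thesis .
  qed
  have FA: "(\<Sum>c\<in>UNIV. A c * chr \<xi> c) = cnj (G \<xi>) * G \<xi>" for \<xi>
  proof -
    have "(\<Sum>c\<in>UNIV. A c * chr \<xi> c)
        = (\<Sum>c\<in>UNIV. \<Sum>y\<in>UNIV. (cnj (g y) * chr \<xi> y) * (g (vadd y c) * chr \<xi> (vadd y c)))"
      unfolding A_def sum_distrib_right
      by (rule sum.cong[OF refl], rule sum.cong[OF refl])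
         (simp add: chr_add2 mult_ac)
    also have "\<dots> = (\<Sum>y\<in>UNIV. \<Sum>c\<in>UNIV. (cnj (g y) * chr \<xi> y) * (g (vadd y c) * chr \<xi> (vadd y c)))"
      by (rule sum.swap)
    also have "\<dots> = (\<Sum>y\<in>UNIV. (cnj (g y) * chr \<xi> y) * G \<xi>)"
    proof -
      have "\<And>y. (\<Sum>c\<in>UNIV. g (vadd y c) * chr \<xi> (vadd y c)) = G \<xi>"
        unfolding G_def using sum_shift[of "\<lambda>x. g x * chr \<xi> x"] by (simp add: vadd_comm)
      then show ?thesis by (simp add: sum_distrib_left[symmetric])
    qed
    also have "\<dots> = cnj (G \<xi>) * G \<xi>"
      unfolding G_def by (simp add: sum_distrib_right)
    finally show ?thesis .
  qed
  have "of_nat CARD('n f2vec) * (\<Sum>c\<in>UNIV. A c * cnj (A c))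
      = (\<Sum>\<xi>\<in>UNIV. (\<Sum>c\<in>UNIV. A c * chr \<xi> c) * cnj (\<Sum>c\<in>UNIV. A c * chr \<xi> c))"
    by (rule parseval[symmetric])
  also have "\<dots> = (\<Sum>\<xi>\<in>UNIV. of_real ((cmod (G \<xi>)) ^ 4))"
  proof (rule sum.cong[OF refl])
    fix \<xi>
    have "(cnj (G \<xi>) * G \<xi>) * cnj (cnj (G \<xi>) * G \<xi>) = (G \<xi> * cnj (G \<xi>)) * (G \<xi> * cnj (G \<xi>))"
      by (simp add: mult_ac)
    also have "\<dots> = of_real ((cmod (G \<xi>))^2) * of_real ((cmod (G \<xi>))^2)"
      by (simp only: complex_norm_square)
    also have "\<dots> = of_real ((cmod (G \<xi>)) ^ 4)"
      by (simp only: of_real_mult[symmetric]) (simp add: power_mult_distrib power4_eq_xxxx power2_eq_square)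
    finally show "(\<Sum>c\<in>UNIV. A c * chr \<xi> c) * cnj (\<Sum>c\<in>UNIV. A c * chr \<xi> c) = of_real ((cmod (G \<xi>)) ^ 4)"
      unfolding FA .
  qed
  finally show ?thesis unfolding sw inner G_def .
qed

lemma eq_div_aux: "(N::complex) \<noteq> 0 \<Longrightarrow> N * X = Y \<Longrightarrow> X = Y / N"
  by (simp add: field_simps)

lemma U3_formula:
  fixes \<psi> :: "('n::finite) f2vec \<Rightarrow> complex"
  shows "Ex (\<lambda>x. Ex (\<lambda>a. Ex (\<lambda>b. Ex (\<lambda>c. Delta a (Delta b (Delta c \<psi>)) x))))
       = of_real (\<Sum>u\<in>UNIV. (cmod (ip (W u \<psi>) \<psi>)) ^ 4) / of_nat CARD('n f2vec)"
proof -
  define N where "N = (of_nat CARD('n f2vec) :: complex)"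
  have N0: "N \<noteq> 0" unfolding N_def by simp
  have cN: "cmod N = real CARD('n f2vec)" unfolding N_def by simp
  have "Ex (\<lambda>x. Ex (\<lambda>a. Ex (\<lambda>b. Ex (\<lambda>c. Delta a (Delta b (Delta c \<psi>)) x))))
      = (\<Sum>x\<in>UNIV. \<Sum>a\<in>UNIV. \<Sum>b\<in>UNIV. \<Sum>c\<in>UNIV. Delta a (Delta b (Delta c \<psi>)) x) / (N*N*N*N)"
    unfolding Ex_def N_def[symmetric] by (simp add: sum_divide_distrib)
  also have "(\<Sum>x\<in>UNIV. \<Sum>a\<in>UNIV. \<Sum>b\<in>UNIV. \<Sum>c\<in>UNIV. Delta a (Delta b (Delta c \<psi>)) x)
      = (\<Sum>a\<in>UNIV. \<Sum>x\<in>UNIV. \<Sum>b\<in>UNIV. \<Sum>c\<in>UNIV. Delta b (Delta c (Delta a \<psi>)) x)"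
    by (subst sum.swap) (intro sum.cong refl Delta_comm3)
  also have "\<dots> = (\<Sum>a\<in>UNIV. (\<Sum>\<xi>\<in>UNIV. of_real ((cmod (\<Sum>x\<in>UNIV. Delta a \<psi> x * chr \<xi> x)) ^ 4)) / N)"
  proof (rule sum.cong[OF refl])
    fix a
    have "N * (\<Sum>x\<in>UNIV. \<Sum>b\<in>UNIV. \<Sum>c\<in>UNIV. Delta b (Delta c (Delta a \<psi>)) x)
       = (\<Sum>\<xi>\<in>UNIV. of_real ((cmod (\<Sum>x\<in>UNIV. Delta a \<psi> x * chr \<xi> x)) ^ 4))"
      using U2_sum[of "Delta a \<psi>"] unfolding N_def .
    then show "(\<Sum>x\<in>UNIV. \<Sum>b\<in>UNIV. \<Sum>c\<in>UNIV. Delta b (Delta c (Delta a \<psi>)) x)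
       = (\<Sum>\<xi>\<in>UNIV. of_real ((cmod (\<Sum>x\<in>UNIV. Delta a \<psi> x * chr \<xi> x)) ^ 4)) / N"
      by (rule eq_div_aux[OF N0])
  qed
  also have "\<dots> = (\<Sum>a\<in>UNIV. \<Sum>\<xi>\<in>UNIV. of_real ((cmod (ip (W (a,\<xi>) \<psi>) \<psi>)) ^ 4) * (N*N*N))"
  proof (rule sum.cong[OF refl])
    fix a
    have e: "(\<Sum>x\<in>UNIV. Delta a \<psi> x * chr \<xi> x) = N * ip (W (a,\<xi>) \<psi>) \<psi>" for \<xi>
      unfolding ip_sp N_def[symmetric] using N0 unfolding sp_def W_def Delta_def by (simp add: mult_ac)
    have t: "of_real ((cmod (N * z)) ^ 4) / N = of_real ((cmod z) ^ 4) * (N*N*N)" for z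
    proof -
      have "of_real ((cmod (N * z)) ^ 4) = (of_real (cmod N) ^ 4 * of_real ((cmod z) ^ 4) :: complex)"
        by (simp add: norm_mult power_mult_distrib)
      also have "(of_real (cmod N) :: complex) = N" unfolding cN N_def by simp
      finally show ?thesis using N0 by (simp add: field_simps power4_eq_xxxx)
    qed
    show "(\<Sum>\<xi>\<in>UNIV. of_real ((cmod (\<Sum>x\<in>UNIV. Delta a \<psi> x * chr \<xi> x)) ^ 4)) / N
        = (\<Sum>\<xi>\<in>UNIV. of_real ((cmod (ip (W (a,\<xi>) \<psi>) \<psi>)) ^ 4) * (N*N*N))"
      unfolding e sum_divide_distrib t ..
  qed
  also have "\<dots> = (\<Sum>a\<in>UNIV. \<Sum>\<xi>\<in>UNIV. of_real ((cmod (ip (W (a,\<xi>) \<psi>) \<psi>)) ^ 4)) * (N*N*N)"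
    by (simp only: sum_distrib_right)
  also have "(\<Sum>a\<in>UNIV. \<Sum>\<xi>\<in>UNIV. of_real ((cmod (ip (W (a,\<xi>) \<psi>) \<psi>)) ^ 4))
      = (of_real (\<Sum>u\<in>UNIV. (cmod (ip (W u \<psi>) \<psi>)) ^ 4) :: complex)"
  proof -
    have U: "(UNIV :: ('n f2vec \<times> 'n f2vec) set) = UNIV \<times> UNIV" by simp
    show ?thesis unfolding U sum.cartesian_product of_real_sum by simp
  qed
  finally show ?thesis using N0 unfolding N_def[symmetric] by (simp add: field_simps)
qed


definition cc :: "(('n::finite) f2vec \<Rightarrow> complex) \<Rightarrow> 'n f2vec \<times> 'n f2vec \<Rightarrow> complex" where
  "cc \<psi> u = ip (W u \<psi>) \<psi>"

lemma sp_diff1: "sp (\<lambda>x. g x - h x) f = sp g f - sp h f"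
  unfolding sp_def by (simp add: algebra_simps sum_subtractf)
lemma sp_diff2: "sp f (\<lambda>x. g x - h x) = sp f g - sp f h"
  unfolding sp_def by (simp add: algebra_simps sum_subtractf)
lemma ip_diff1: "ip (\<lambda>x. g x - h x) f = ip g f - ip h f"
  unfolding ip_sp sp_diff1 by (simp add: diff_divide_distrib)
lemma ip_diff2: "ip f (\<lambda>x. g x - h x) = ip f g - ip f h"
  unfolding ip_sp sp_diff2 by (simp add: diff_divide_distrib)

lemma ip_self_eq0: "ip g g = 0 \<Longrightarrow> g = (\<lambda>x. 0)"
  unfolding ip_sp by (rule sp_self_eq0) simp

lemma norm2_one: "norm2 \<psi> = 1 \<longleftrightarrow> ip \<psi> \<psi> = 1"
proof -
  have "norm2 \<psi> = 1 \<longleftrightarrow> Re (ip \<psi> \<psi>) = 1" unfolding norm2_def by simp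
  also have "\<dots> \<longleftrightarrow> ip \<psi> \<psi> = 1"
  proof
    assume "Re (ip \<psi> \<psi>) = 1"
    then show "ip \<psi> \<psi> = 1" by (subst ip_self_real) simp
  qed simp
  finally show ?thesis .
qed

lemma mult_cnj_real: "z * cnj z = of_real ((cmod z)^2)"
  by (rule complex_norm_square[symmetric])

lemma cc_bound:
  assumes u: "ip \<psi> \<psi> = 1"
  shows "cmod (cc \<psi> u) \<le> 1" and "cmod (cc \<psi> u) = 1 \<Longrightarrow> W u \<psi> = (\<lambda>x. cc \<psi> u * \<psi> x)"
proof -
  define k where "k = cc \<psi> u"
  define g where "g = W u \<psi>"
  define D where "D = (\<lambda>x. g x - k * \<psi> x)"
  have gg: "ip g g = 1" unfolding g_def ip_W_W u ..
  have gp: "ip g \<psi> = k" unfolding g_def k_def cc_def ..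
  have pg: "ip \<psi> g = cnj k" using gp ip_cnj[of g \<psi>] by simp
  have "ip D D = ip g g - cnj k * ip g \<psi> - (k * ip \<psi> g - k * cnj k * ip \<psi> \<psi>)"
    unfolding D_def ip_diff1 ip_diff2 ip_scale1 ip_scale2 by (simp add: algebra_simps)
  also have "\<dots> = 1 - k * cnj k" unfolding gg gp pg u by (simp add: algebra_simps)
  finally have DD: "ip D D = of_real (1 - (cmod k)^2)" by (simp add: mult_cnj_real)
  have "Re (ip D D) \<ge> 0" by (rule ip_self_nonneg)
  then have "(cmod k)^2 \<le> 1" unfolding DD by simp
  then show "cmod (cc \<psi> u) \<le> 1" unfolding k_def by (simp add: power_le_one_iff)
  assume "cmod (cc \<psi> u) = 1"
  then have "ip D D = 0" unfolding DD k_def by simp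
  then have "D = (\<lambda>x. 0)" by (rule ip_self_eq0)
  then show "W u \<psi> = (\<lambda>x. cc \<psi> u * \<psi> x)"
    unfolding D_def g_def k_def by (auto simp: fun_eq_iff)
qed

lemma cc_eig:
  assumes u: "ip \<psi> \<psi> = 1" and e: "W u \<psi> = (\<lambda>x. k * \<psi> x)"
  shows "cc \<psi> u = k" and "cmod k = 1"
proof -
  show ck: "cc \<psi> u = k" unfolding cc_def e ip_scale1 u by simp
  have "ip (W u \<psi>) (W u \<psi>) = 1" unfolding ip_W_W u ..
  then have "k * cnj k * ip \<psi> \<psi> = 1" unfolding e ip_scale1 ip_scale2 by (simp add: mult_ac)
  then have "of_real ((cmod k)^2) = (1::complex)" unfolding u mult_cnj_real by simp
  then have "(cmod k)^2 = 1" by (metis of_real_eq_1_iff)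
  then show "cmod k = 1" using norm_ge_zero[of k] by (auto simp: power2_eq_1_iff)
qed

lemma cc_sum2:
  fixes \<psi> :: "('n::finite) f2vec \<Rightarrow> complex"
  assumes u: "ip \<psi> \<psi> = 1"
  shows "(\<Sum>u\<in>UNIV. (cmod (cc \<psi> u))^2) = real CARD('n f2vec)"
proof -
  have "(\<Sum>u\<in>UNIV. ip (W u \<psi>) \<psi> * cnj (ip (W u \<psi>) \<psi>)) = of_nat CARD('n f2vec) * ip \<psi> \<psi> * ip \<psi> \<psi>"
    by (rule polar)
  then have "of_real (\<Sum>u\<in>UNIV. (cmod (cc \<psi> u))^2) = (of_nat CARD('n f2vec) :: complex)"
    unfolding u mult_cnj_real cc_def of_real_sum by simp
  then show ?thesis by (metis of_real_eq_iff of_real_of_nat_eq)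
qed

lemma cc_zero: "cc \<psi> (vzero, vzero) = ip \<psi> \<psi>" unfolding cc_def by simp

lemma powr8_eq1: "(x::real) \<ge> 0 \<Longrightarrow> x powr (1/8) = 1 \<Longrightarrow> x = 1"
proof -
  assume x: "x \<ge> 0" and e: "x powr (1/8) = 1"
  have "x = x powr 1" using x by (simp add: powr_one)
  also have "\<dots> = (x powr (1/8)) powr 8" by (simp add: powr_powr)
  also have "\<dots> = 1" unfolding e by simp
  finally show ?thesis .
qed

lemma padd_assoc: "padd (padd u v) w = padd u (padd v w)" unfolding padd_def by (simp add: vadd_assoc)
lemma padd_lcomm: "padd u (padd v w) = padd v (padd u w)" unfolding padd_def by (simp add: vadd_lcomm)
lemmas padd_ac = padd_assoc padd_comm padd_lcomm
lemma padd_self[simp]: "padd u u = (vzero, vzero)" unfolding padd_def by simp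
lemma padd_zero[simp]: "padd u (vzero, vzero) = u" "padd (vzero, vzero) u = u" unfolding padd_def by simp_all
lemma padd_cancel[simp]: "padd u (padd u v) = v" by (simp add: padd_assoc[symmetric])
lemma padd_eq_zero_iff: "padd u v = (vzero, vzero) \<longleftrightarrow> u = v"
  unfolding padd_def by (cases u, cases v) (auto simp: vadd_eq_zero_iff)

lemma sympl_comm: "sympl u v = sympl v u" unfolding sympl_def by (auto simp: vdot_comm)
lemma sympl_self[simp]: "\<not> sympl u u" unfolding sympl_def by (simp add: vdot_comm)
lemma sympl_padd1: "sympl (padd u v) w = (sympl u w \<noteq> sympl v w)"
  unfolding sympl_def padd_def by (auto simp: vdot_add_left)
lemma sympl_padd2: "sympl w (padd u v) = (sympl w u \<noteq> sympl w v)"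
  using sympl_padd1[of u v w] by (simp add: sympl_comm)

lemma subspace_padd: "f2_subspace L \<Longrightarrow> u \<in> L \<Longrightarrow> v \<in> L \<Longrightarrow> padd u v \<in> L"
  unfolding f2_subspace_def padd_def by blast
lemma subspace_padd_iff: "f2_subspace L \<longleftrightarrow> (vzero, vzero) \<in> L \<and> (\<forall>u\<in>L. \<forall>v\<in>L. padd u v \<in> L)"
  unfolding f2_subspace_def padd_def by simp

lemma padd_uu: "padd (padd u l) (padd u l') = padd l l'"
  unfolding padd_def vadd_def by (auto simp: fun_eq_iff)
lemma padd_x_ul: "padd x (padd u l) = padd u (padd x l)"
  unfolding padd_def vadd_def by (auto simp: fun_eq_iff)
lemma padd_ul_y: "padd (padd u l) y = padd u (padd l y)"
  unfolding padd_def vadd_def by (auto simp: fun_eq_iff)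

lemma lagr_out:
  assumes L: "lagrangian L" and u: "u \<notin> L"
  shows "\<exists>v\<in>L. sympl u v"
proof (rule ccontr)
  assume "\<not> (\<exists>v\<in>L. sympl u v)"
  then have nu: "\<And>v. v \<in> L \<Longrightarrow> \<not> sympl u v" by blast
  then have nu': "\<And>v. v \<in> L \<Longrightarrow> \<not> sympl v u" by (simp add: sympl_comm)
  have iso: "isotropic L" and mx: "\<And>M. isotropic M \<Longrightarrow> L \<subseteq> M \<Longrightarrow> M = L"
    using L unfolding lagrangian_def by auto
  have sub: "f2_subspace L" and iL: "\<And>x y. x \<in> L \<Longrightarrow> y \<in> L \<Longrightarrow> \<not> sympl x y"
    using iso unfolding isotropic_def by auto
  have pL: "\<And>x y. x \<in> L \<Longrightarrow> y \<in> L \<Longrightarrow> padd x y \<in> L" using subspace_padd[OF sub] .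
  define M where "M = L \<union> padd u ` L"
  have MI1: "\<And>x. x \<in> L \<Longrightarrow> x \<in> M" unfolding M_def by blast
  have MI2: "\<And>l. l \<in> L \<Longrightarrow> padd u l \<in> M" unfolding M_def by blast
  have ME: "\<And>x. x \<in> M \<Longrightarrow> x \<notin> L \<Longrightarrow> \<exists>l\<in>L. x = padd u l" unfolding M_def by blast
  have z: "(vzero, vzero) \<in> L" using sub unfolding f2_subspace_def by simp
  have cl: "padd x y \<in> M \<and> \<not> sympl x y" if xM: "x \<in> M" and yM: "y \<in> M" for x y
  proof (cases "x \<in> L")
    case xL: True
    show ?thesis
    proof (cases "y \<in> L")
      case True then show ?thesis using xL pL iL MI1 by blast
    next
      case False
      then obtain l where l: "l \<in> L" "y = padd u l" using yM ME by blast
      have "padd x y = padd u (padd x l)" unfolding l(2) by (rule padd_x_ul)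
      moreover have "\<not> sympl x y" unfolding l(2) sympl_padd2 using nu' xL iL l(1) by blast
      ultimately show ?thesis using MI2 pL xL l(1) by metis
    qed
  next
    case False
    then obtain l where l: "l \<in> L" "x = padd u l" using xM ME by blast
    show ?thesis
    proof (cases "y \<in> L")
      case yL: True
      have "padd x y = padd u (padd l y)" unfolding l(2) by (rule padd_ul_y)
      moreover have "\<not> sympl x y" unfolding l(2) sympl_padd1 using nu yL iL l(1) by blast
      ultimately show ?thesis using MI2 pL yL l(1) by metis
    next
      case False
      then obtain l' where l': "l' \<in> L" "y = padd u l'" using yM ME by blast
      have "padd x y = padd l l'" unfolding l(2) l'(2) by (rule padd_uu)
      moreover have "\<not> sympl x y" unfolding l(2) l'(2) sympl_padd1 sympl_padd2
        using nu nu' iL l(1) l'(1) sympl_self[of u] by blast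
      ultimately show ?thesis using MI1 pL l(1) l'(1) by metis
    qed
  qed
  have "isotropic M" unfolding isotropic_def subspace_padd_iff
    using MI1[OF z] cl by blast
  moreover have "L \<subseteq> M" unfolding M_def by blast
  ultimately have "M = L" by (rule mx)
  moreover have "u \<in> M" using MI2[OF z] by simp
  ultimately show False using u by simp
qed


lemma stabLag_eq:
  assumes L: "lagrangian S"
    and ind: "\<And>u. cmod (cc \<psi> u) = (if u \<in> S then 1 else 0)"
  shows "stabLag \<psi> = S"
  unfolding stabLag_def
proof (rule the_equality)
  show "lagrangian S \<and> (\<forall>a b. cmod (fhat (Delta a \<psi>) b) = (if (a, b) \<in> S then 1 else 0))"
    using L ind unfolding fhat_Delta cc_def by simp
next
  fix L' assume "lagrangian L' \<and> (\<forall>a b. cmod (fhat (Delta a \<psi>) b) = (if (a, b) \<in> L' then 1 else 0))"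
  then have h: "\<And>a b. cmod (cc \<psi> (a,b)) = (if (a, b) \<in> L' then 1 else 0)"
    unfolding fhat_Delta cc_def by simp
  show "L' = S"
  proof (rule set_eqI)
    fix u :: "'a f2vec \<times> 'a f2vec"
    obtain a b where u: "u = (a,b)" by (cases u)
    show "u \<in> L' \<longleftrightarrow> u \<in> S" using h[of a b] ind[of u] unfolding u
      by (auto split: if_splits)
  qed
qed

lemma neg_self_zero: "(a::complex) = - a \<Longrightarrow> a = 0" by simp

lemma U3_cc:
  fixes \<psi> :: "('n::finite) f2vec \<Rightarrow> complex"
  shows "U3 \<psi> = ((\<Sum>u\<in>UNIV. (cmod (cc \<psi> u)) ^ 4) / real CARD('n f2vec)) powr (1/8)"
proof -
  have "Re (of_real (\<Sum>u\<in>UNIV. (cmod (cc \<psi> u)) ^ 4) / (of_nat CARD('n f2vec) :: complex))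
      = (\<Sum>u\<in>UNIV. (cmod (cc \<psi> u)) ^ 4) / real CARD('n f2vec)"
    by simp
  then show ?thesis unfolding U3_def U3_formula cc_def by simp
qed

lemma sq4: "(x::real)^4 = x^2 * x^2" by (simp add: power4_eq_xxxx power2_eq_square)

lemma zero_one_from_sums:
  fixes c :: "'a \<Rightarrow> real" and A :: "'a set"
  assumes fin: "finite A" and b: "\<And>u. u \<in> A \<Longrightarrow> 0 \<le> c u \<and> c u \<le> 1"
    and s: "(\<Sum>u\<in>A. (c u)^2) = (\<Sum>u\<in>A. (c u)^4)"
  shows "\<And>u. u \<in> A \<Longrightarrow> c u = 0 \<or> c u = 1"
proof -
  fix u assume uA: "u \<in> A"
  have nn: "\<forall>v\<in>A. 0 \<le> (c v)^2 - (c v)^4"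
  proof
    fix v assume "v \<in> A"
    then have c0: "0 \<le> c v" and c1: "c v \<le> 1" using b by auto
    have "(c v)^2 \<le> 1" using c0 c1 by (rule power_le_one)
    then have "(c v)^2 * (c v)^2 \<le> (c v)^2 * 1" by (intro mult_left_mono) simp_all
    then show "0 \<le> (c v)^2 - (c v)^4" unfolding sq4 by simp
  qed
  have "(\<Sum>v\<in>A. (c v)^2 - (c v)^4) = (\<Sum>v\<in>A. (c v)^2) - (\<Sum>v\<in>A. (c v)^4)"
    by (rule sum_subtractf)
  also have "\<dots> = 0" unfolding s by simp
  finally have s0: "(\<Sum>v\<in>A. (c v)^2 - (c v)^4) = 0" .
  have nn': "\<And>v. v \<in> A \<Longrightarrow> 0 \<le> (c v)^2 - (c v)^4" using nn by blast
  have all0: "\<forall>v\<in>A. (c v)^2 - (c v)^4 = 0"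
    using iffD1[OF sum_nonneg_eq_0_iff[OF fin nn'] s0] .
  have e0: "(c u)^2 - (c u)^4 = 0" using bspec[OF all0 uA] .
  then have e: "(c u)^2 - (c u)^2 * (c u)^2 = 0" by (simp only: sq4)
  have "(c u)^2 = 0 \<or> (c u)^2 = 1"
  proof -
    define t where "t = (c u)^2"
    have "t - t * t = 0" using e unfolding t_def .
    then have "t * (1 - t) = 0" by (simp add: right_diff_distrib)
    then have "t = 0 \<or> t = 1" by simp
    then show ?thesis unfolding t_def .
  qed
  then show "c u = 0 \<or> c u = 1" using b[OF uA] by (auto simp: power2_eq_1_iff)
qed

lemma stab_props:
  fixes \<psi> :: "('n::finite) f2vec \<Rightarrow> complex"
  assumes st: "stabilizer_state \<psi>"
  defines "S \<equiv> {u. cmod (cc \<psi> u) = 1}"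
  shows "ip \<psi> \<psi> = 1" "\<And>u. cmod (cc \<psi> u) = (if u \<in> S then 1 else 0)"
    "lagrangian S" "stabLag \<psi> = S"
    "\<And>u. u \<in> S \<Longrightarrow> W u \<psi> = (\<lambda>x. cc \<psi> u * \<psi> x)"
proof -
  define N where "N = real CARD('n f2vec)"
  have Npos: "N > 0" unfolding N_def by simp
  show un: "ip \<psi> \<psi> = 1" using st unfolding stabilizer_state_def norm2_one by simp
  have "U3 \<psi> = 1" using st unfolding stabilizer_state_def by simp
  then have "((\<Sum>u\<in>UNIV. (cmod (cc \<psi> u)) ^ 4) / N) powr (1/8) = 1" unfolding U3_cc N_def .
  then have "(\<Sum>u\<in>UNIV. (cmod (cc \<psi> u)) ^ 4) / N = 1"
    by (rule powr8_eq1[rotated]) (auto intro!: sum_nonneg divide_nonneg_nonneg simp: N_def)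
  then have s4: "(\<Sum>u\<in>UNIV. (cmod (cc \<psi> u)) ^ 4) = N" using Npos by (simp add: field_simps)
  have s2: "(\<Sum>u\<in>UNIV. (cmod (cc \<psi> u)) ^ 2) = N" unfolding N_def by (rule cc_sum2[OF un])
  have zo: "\<And>u. cmod (cc \<psi> u) = 0 \<or> cmod (cc \<psi> u) = 1"
    using zero_one_from_sums[of UNIV "\<lambda>u. cmod (cc \<psi> u)"] s2 s4 cc_bound(1)[OF un] by auto
  show ind: "\<And>u. cmod (cc \<psi> u) = (if u \<in> S then 1 else 0)"
    using zo unfolding S_def by auto
  show eig: "\<And>u. u \<in> S \<Longrightarrow> W u \<psi> = (\<lambda>x. cc \<psi> u * \<psi> x)"
    using cc_bound(2)[OF un] unfolding S_def by auto
  have cardS: "real (card S) = N"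
  proof -
    have "(\<Sum>u\<in>UNIV. (cmod (cc \<psi> u)) ^ 2) = (\<Sum>u\<in>UNIV. if u \<in> S then 1 else 0)"
      using ind by (intro sum.cong) auto
    also have "\<dots> = real (card S)" by (simp add: sum.If_cases)
    finally show ?thesis using s2 by simp
  qed
  have psi0: "\<exists>x. \<psi> x \<noteq> 0"
  proof (rule ccontr)
    assume "\<not> (\<exists>x. \<psi> x \<noteq> 0)"
    then have "\<psi> = (\<lambda>x. 0)" by auto
    then have "ip \<psi> \<psi> = 0" unfolding ip_def Ex_def by simp
    then show False using un by simp
  qed
  have clos: "padd u v \<in> S" and iso: "\<not> sympl u v" if uS: "u \<in> S" and vS: "v \<in> S" for u v
  proof -
    have cu: "cmod (cc \<psi> u) = 1" and cv: "cmod (cc \<psi> v) = 1" using uS vS unfolding S_def by auto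
    have e1: "W u (W v \<psi>) x = cc \<psi> u * cc \<psi> v * \<psi> x" for x
      unfolding eig[OF vS] W_scale eig[OF uS] by simp
    have "W (padd u v) \<psi> = (\<lambda>x. (chr (snd v) (fst u) * (cc \<psi> u * cc \<psi> v)) * \<psi> x)"
    proof (rule ext)
      fix x
      have "W u (W v \<psi>) x = chr (snd v) (fst u) * W (padd u v) \<psi> x" by (rule W_comp)
      then have "chr (snd v) (fst u) * (cc \<psi> u * cc \<psi> v * \<psi> x) = chr (snd v) (fst u) * (chr (snd v) (fst u) * W (padd u v) \<psi> x)"
        unfolding e1 by simp
      then show "W (padd u v) \<psi> x = (chr (snd v) (fst u) * (cc \<psi> u * cc \<psi> v)) * \<psi> x"
        by (simp add: mult_ac)
    qed
    then have "cmod (chr (snd v) (fst u) * (cc \<psi> u * cc \<psi> v)) = 1" by (rule cc_eig(2)[OF un])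
    then have "cmod (cc \<psi> (padd u v)) = 1"
      using cc_eig(1)[OF un \<open>W (padd u v) \<psi> = _\<close>] by simp
    then show "padd u v \<in> S" unfolding S_def by simp
    show "\<not> sympl u v"
    proof
      assume sy: "sympl u v"
      obtain x where x: "\<psi> x \<noteq> 0" using psi0 by blast
      have "W u (W v \<psi>) x = - W v (W u \<psi>) x" using W_commute[of u v \<psi> x] sy by simp
      moreover have "W v (W u \<psi>) x = cc \<psi> v * cc \<psi> u * \<psi> x"
        unfolding eig[OF uS] W_scale eig[OF vS] by simp
      ultimately have "cc \<psi> u * cc \<psi> v * \<psi> x = - (cc \<psi> u * cc \<psi> v * \<psi> x)"
        unfolding e1 by (simp add: mult_ac)
      then have z: "cc \<psi> u * cc \<psi> v * \<psi> x = 0" by (rule neg_self_zero)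
      have "cc \<psi> u \<noteq> 0" "cc \<psi> v \<noteq> 0" using cu cv by auto
      then have "cc \<psi> u * cc \<psi> v * \<psi> x \<noteq> 0" using x by simp
      then show False using z by blast
    qed
  qed
  have zS: "(vzero, vzero) \<in> S" using cc_zero[of \<psi>] un unfolding S_def by simp
  have isoS: "isotropic S"
    unfolding isotropic_def subspace_padd_iff using zS clos iso by blast
  have maxS: "M = S" if Mi: "isotropic M" and SM: "S \<subseteq> M" for M
  proof
    show "S \<subseteq> M" by (rule SM)
    show "M \<subseteq> S"
    proof
      fix w assume wM: "w \<in> M"
      define \<phi> where "\<phi> = W w \<psi>"
      have pp: "ip \<phi> \<phi> = 1" unfolding \<phi>_def ip_W_W un ..
      have eigphi: "W u \<phi> = (\<lambda>x. cc \<psi> u * \<phi> x)" if uS: "u \<in> S" for u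
      proof -
        have "\<not> sympl u w" using Mi uS SM wM unfolding isotropic_def by blast
        then have "W u \<phi> = W w (W u \<psi>)" unfolding \<phi>_def by (rule W_commute_iso)
        also have "\<dots> = (\<lambda>x. cc \<psi> u * \<phi> x)" unfolding eig[OF uS] W_scale \<phi>_def ..
        finally show ?thesis .
      qed
      have "(\<Sum>u\<in>UNIV. ip (W u \<phi>) \<phi> * cnj (ip (W u \<psi>) \<psi>)) = of_nat CARD('n f2vec) * ip \<phi> \<psi> * ip \<psi> \<phi>"
        by (rule polar)
      moreover have "(\<Sum>u\<in>UNIV. ip (W u \<phi>) \<phi> * cnj (ip (W u \<psi>) \<psi>)) = (\<Sum>u\<in>UNIV. if u \<in> S then 1 else 0)"
      proof (rule sum.cong[OF refl])
        fix u
        show "ip (W u \<phi>) \<phi> * cnj (ip (W u \<psi>) \<psi>) = (if u \<in> S then 1 else 0)"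
        proof (cases "u \<in> S")
          case True
          have "ip (W u \<phi>) \<phi> * cnj (ip (W u \<psi>) \<psi>) = cc \<psi> u * cnj (cc \<psi> u)"
            unfolding eigphi[OF True] ip_scale1 pp cc_def by simp
          also have "\<dots> = 1" unfolding mult_cnj_real using True unfolding S_def by simp
          finally show ?thesis using True by simp
        next
          case False
          then have "cc \<psi> u = 0" using ind[of u] by simp
          then show ?thesis using False unfolding cc_def by simp
        qed
      qed
      moreover have "(\<Sum>u\<in>UNIV. (if u \<in> S then 1 else 0) :: complex) = of_nat (card S)"
        by (simp add: sum.If_cases)
      moreover have "card S = CARD('n f2vec)" using cardS unfolding N_def by simp
      ultimately have "of_nat CARD('n f2vec) * ip \<phi> \<psi> * ip \<psi> \<phi> = (of_nat CARD('n f2vec) :: complex)"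
        by simp
      then have "ip \<phi> \<psi> * cnj (ip \<phi> \<psi>) = 1" unfolding ip_cnj by simp
      then have "of_real ((cmod (ip \<phi> \<psi>))^2) = (1::complex)" unfolding mult_cnj_real .
      then have "(cmod (ip \<phi> \<psi>))^2 = 1" by (metis of_real_eq_1_iff)
      then have "cmod (ip \<phi> \<psi>) = 1" using norm_ge_zero[of "ip \<phi> \<psi>"] by (auto simp: power2_eq_1_iff)
      then show "w \<in> S" unfolding S_def cc_def \<phi>_def by simp
    qed
  qed
  show lagS: "lagrangian S" unfolding lagrangian_def using isoS maxS by blast
  show "stabLag \<psi> = S" by (rule stabLag_eq[OF lagS ind])
qed


definition JE :: "('n f2vec \<times> 'n f2vec) set \<Rightarrow> (('n::finite) f2vec \<Rightarrow> complex) \<Rightarrow> bool" where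
  "JE L h \<longleftrightarrow> (\<forall>u\<in>L. \<exists>k. W u h = (\<lambda>x. k * h x))"

lemma sigma_sq:
  "(if vdot (fst w) (snd w) then \<i> else 1) * (if vdot (fst w) (snd w) then \<i> else 1)
     * chr (snd w) (fst w) = 1"
  unfolding chr_def by (simp add: vdot_comm)

lemma je_step:
  fixes h :: "('n::finite) f2vec \<Rightarrow> complex"
  assumes iso: "\<And>u. u \<in> F \<Longrightarrow> \<not> sympl u w"
    and h0: "h \<noteq> (\<lambda>x. 0)" and je: "JE F h"
  shows "\<exists>h'. h' \<noteq> (\<lambda>x. 0) \<and> JE (insert w F) h'"
proof -
  define \<sigma> where "\<sigma> = (if vdot (fst w) (snd w) then \<i> else 1)"
  have ss: "\<sigma> * \<sigma> * chr (snd w) (fst w) = 1" unfolding \<sigma>_def by (rule sigma_sq)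
  have s0: "\<sigma> \<noteq> 0" unfolding \<sigma>_def by simp
  define V where "V = (\<lambda>x. \<sigma> * W w h x)"
  have WV: "W w V x = (\<sigma> * chr (snd w) (fst w)) * h x" for x
    unfolding V_def W_scale W_sq by simp
  have WuV: "\<exists>k. W u h = (\<lambda>x. k * h x) \<and> W u V = (\<lambda>x. k * V x)" if uF: "u \<in> F" for u
  proof -
    obtain k where k: "W u h = (\<lambda>x. k * h x)" using je uF unfolding JE_def by blast
    have "W u V = (\<lambda>x. \<sigma> * W u (W w h) x)" unfolding V_def W_scale ..
    also have "\<dots> = (\<lambda>x. \<sigma> * W w (W u h) x)" using W_commute_iso[OF iso[OF uF]] by simp
    also have "\<dots> = (\<lambda>x. k * V x)" unfolding k W_scale V_def by (simp add: mult_ac)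
    finally show ?thesis using k by blast
  qed
  define hp where "hp = (\<lambda>x. h x + V x)"
  define hm where "hm = (\<lambda>x. h x - V x)"
  have jp: "JE (insert w F) hp"
    unfolding JE_def
  proof
    fix u assume "u \<in> insert w F"
    then consider "u = w" | "u \<in> F" by blast
    then show "\<exists>k. W u hp = (\<lambda>x. k * hp x)"
    proof cases
      case 1
      have "W w hp = (\<lambda>x. inverse \<sigma> * hp x)"
      proof (rule ext)
        fix x
        have "W w hp x = W w h x + (\<sigma> * chr (snd w) (fst w)) * h x"
          unfolding hp_def W_add WV ..
        also have "\<dots> = inverse \<sigma> * (\<sigma> * W w h x) + inverse \<sigma> * ((\<sigma> * \<sigma> * chr (snd w) (fst w)) * h x)"
          using s0 by (simp add: field_simps)
        also have "\<dots> = inverse \<sigma> * hp x" unfolding ss hp_def V_def by (simp add: algebra_simps)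
        finally show "W w hp x = inverse \<sigma> * hp x" .
      qed
      then show ?thesis using 1 by blast
    next
      case 2
      obtain k where k: "W u h = (\<lambda>x. k * h x)" "W u V = (\<lambda>x. k * V x)" using WuV[OF 2] by blast
      have "W u hp = (\<lambda>x. k * hp x)" unfolding hp_def W_add k by (simp add: algebra_simps)
      then show ?thesis by blast
    qed
  qed
  have jm: "JE (insert w F) hm"
    unfolding JE_def
  proof
    fix u assume "u \<in> insert w F"
    then consider "u = w" | "u \<in> F" by blast
    then show "\<exists>k. W u hm = (\<lambda>x. k * hm x)"
    proof cases
      case 1
      have "W w hm = (\<lambda>x. - inverse \<sigma> * hm x)"
      proof (rule ext)
        fix x
        have "W w hm x = W w h x - (\<sigma> * chr (snd w) (fst w)) * h x"
          unfolding hm_def W_diff WV ..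
        also have "\<dots> = inverse \<sigma> * (\<sigma> * W w h x) - inverse \<sigma> * ((\<sigma> * \<sigma> * chr (snd w) (fst w)) * h x)"
          using s0 by (simp add: field_simps)
        also have "\<dots> = - inverse \<sigma> * hm x" unfolding ss hm_def V_def by (simp add: algebra_simps)
        finally show "W w hm x = - inverse \<sigma> * hm x" .
      qed
      then show ?thesis using 1 by blast
    next
      case 2
      obtain k where k: "W u h = (\<lambda>x. k * h x)" "W u V = (\<lambda>x. k * V x)" using WuV[OF 2] by blast
      have "W u hm = (\<lambda>x. k * hm x)" unfolding hm_def W_diff k by (simp add: algebra_simps)
      then show ?thesis by blast
    qed
  qed
  have "hp \<noteq> (\<lambda>x. 0) \<or> hm \<noteq> (\<lambda>x. 0)"
  proof (rule ccontr)
    assume "\<not> (hp \<noteq> (\<lambda>x. 0) \<or> hm \<noteq> (\<lambda>x. 0))"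
    then have "\<And>x. h x + V x = 0" "\<And>x. h x - V x = 0" unfolding hp_def hm_def by (auto simp: fun_eq_iff)
    then have "\<And>x. h x = 0"
    proof -
      fix x
      have "2 * h x = (h x + V x) + (h x - V x)" by simp
      also have "\<dots> = 0" using \<open>\<And>x. h x + V x = 0\<close> \<open>\<And>x. h x - V x = 0\<close> by simp
      finally show "h x = 0" by simp
    qed
    then show False using h0 by auto
  qed
  then show ?thesis using jp jm by blast
qed

lemma je_exists:
  fixes L :: "('n::finite f2vec \<times> 'n f2vec) set"
  assumes iso: "isotropic L"
  shows "\<exists>h. h \<noteq> (\<lambda>x. 0) \<and> JE L h"
proof -
  have iL: "\<And>x y. x \<in> L \<Longrightarrow> y \<in> L \<Longrightarrow> \<not> sympl x y" using iso unfolding isotropic_def by auto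
  have "finite F \<Longrightarrow> F \<subseteq> L \<Longrightarrow> \<exists>h::'n f2vec \<Rightarrow> complex. h \<noteq> (\<lambda>x. 0) \<and> JE F h" for F
  proof (induction F rule: finite_induct)
    case empty
    have "(\<lambda>x::'n f2vec. 1::complex) \<noteq> (\<lambda>x. 0)" by (simp add: fun_eq_iff)
    then show ?case unfolding JE_def by blast
  next
    case (insert w F)
    then obtain h :: "'n f2vec \<Rightarrow> complex" where h: "h \<noteq> (\<lambda>x. 0)" "JE F h" by auto
    have "\<And>u. u \<in> F \<Longrightarrow> \<not> sympl u w" using insert.prems iL by blast
    then show ?case using je_step[OF _ h] by blast
  qed
  then show ?thesis by simp
qed

lemma je_normalize:
  assumes h0: "h \<noteq> (\<lambda>x. 0)" and je: "JE L h"
  shows "\<exists>\<phi>. ip \<phi> \<phi> = 1 \<and> JE L \<phi>"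
proof -
  define r where "r = Re (ip h h)"
  have "ip h h \<noteq> 0" using h0 ip_self_eq0 by blast
  have r0: "r \<ge> 0" unfolding r_def by (rule ip_self_nonneg)
  have "r \<noteq> 0"
  proof
    assume "r = 0"
    then have "ip h h = of_real 0" unfolding r_def by (subst ip_self_real) simp
    then show False using \<open>ip h h \<noteq> 0\<close> by simp
  qed
  then have rpos: "r > 0" using r0 by simp
  define s where "s = (of_real (1 / sqrt r) :: complex)"
  define \<phi> where "\<phi> = (\<lambda>x. s * h x)"
  have "ip \<phi> \<phi> = s * cnj s * ip h h" unfolding \<phi>_def ip_scale1 ip_scale2 by (simp add: mult_ac)
  also have "ip h h = of_real r" unfolding r_def by (rule ip_self_real)
  also have "s * cnj s * of_real r = of_real ((1 / sqrt r) * (1 / sqrt r) * r)"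
    unfolding s_def by (simp only: Complex.complex_cnj_complex_of_real of_real_mult)
  also have "(1 / sqrt r) * (1 / sqrt r) * r = 1" using rpos by (simp add: field_simps)
  finally have "ip \<phi> \<phi> = 1" by simp
  moreover have "JE L \<phi>" unfolding JE_def
  proof
    fix u assume "u \<in> L"
    then obtain k where k: "W u h = (\<lambda>x. k * h x)" using je unfolding JE_def by blast
    have "W u \<phi> = (\<lambda>x. k * \<phi> x)" unfolding \<phi>_def W_scale k by (simp add: mult_ac)
    then show "\<exists>k. W u \<phi> = (\<lambda>x. k * \<phi> x)" by blast
  qed
  ultimately show ?thesis by blast
qed

lemma je_props:
  fixes \<phi> :: "('n::finite) f2vec \<Rightarrow> complex"
  assumes L: "lagrangian L" and un: "ip \<phi> \<phi> = 1" and je: "JE L \<phi>"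
  shows "\<And>u. cmod (cc \<phi> u) = (if u \<in> L then 1 else 0)"
    and "\<And>u. u \<in> L \<Longrightarrow> W u \<phi> = (\<lambda>x. cc \<phi> u * \<phi> x)"
    and "card L = CARD('n f2vec)"
    and "stabilizer_state \<phi>" and "stabLag \<phi> = L"
proof -
  have eig: "W u \<phi> = (\<lambda>x. cc \<phi> u * \<phi> x) \<and> cmod (cc \<phi> u) = 1" if uL: "u \<in> L" for u
  proof -
    obtain k where k: "W u \<phi> = (\<lambda>x. k * \<phi> x)" using je uL unfolding JE_def by blast
    show ?thesis using cc_eig[OF un k] k by simp
  qed
  then show "\<And>u. u \<in> L \<Longrightarrow> W u \<phi> = (\<lambda>x. cc \<phi> u * \<phi> x)" by blast
  have out: "cc \<phi> u = 0" if uL: "u \<notin> L" for u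
  proof -
    obtain v where vL: "v \<in> L" and sy: "sympl u v" using lagr_out[OF L uL] by blast
    define k where "k = cc \<phi> v"
    have ev: "W v \<phi> = (\<lambda>x. k * \<phi> x)" and kk: "cmod k = 1" using eig[OF vL] unfolding k_def by auto
    have syv: "sympl v u" using sy by (simp add: sympl_comm)
    have "W v (W u \<phi>) = (\<lambda>x. - k * W u \<phi> x)"
    proof (rule ext)
      fix x
      have "W v (W u \<phi>) x = - W u (W v \<phi>) x" using W_commute[of v u \<phi> x] syv by simp
      also have "\<dots> = - k * W u \<phi> x" unfolding ev W_scale by simp
      finally show "W v (W u \<phi>) x = - k * W u \<phi> x" .
    qed
    then have "ip (W u \<phi>) \<phi> = ip (\<lambda>x. - k * W u \<phi> x) (\<lambda>x. k * \<phi> x)"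
      using ip_W_W[of v "W u \<phi>" \<phi>] ev by simp
    also have "\<dots> = - (k * cnj k) * ip (W u \<phi>) \<phi>" unfolding ip_scale1 ip_scale2 by (simp add: mult_ac)
    also have "k * cnj k = 1" unfolding mult_cnj_real kk by simp
    finally have "ip (W u \<phi>) \<phi> = - ip (W u \<phi>) \<phi>" by simp
    then show ?thesis unfolding cc_def by (rule neg_self_zero)
  qed
  show ind: "\<And>u. cmod (cc \<phi> u) = (if u \<in> L then 1 else 0)" using eig out by simp
  have "(\<Sum>u\<in>UNIV. (cmod (cc \<phi> u))^2) = (\<Sum>u\<in>UNIV. if u \<in> L then 1 else 0)"
    using ind by (intro sum.cong) auto
  also have "\<dots> = real (card L)" by (simp add: sum.If_cases)
  finally have "real (card L) = real CARD('n f2vec)" using cc_sum2[OF un] by simp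
  then show cL: "card L = CARD('n f2vec)" by simp
  have "(\<Sum>u\<in>UNIV. (cmod (cc \<phi> u))^4) = (\<Sum>u\<in>UNIV. if u \<in> L then 1 else 0)"
    using ind by (intro sum.cong) auto
  also have "\<dots> = real (card L)" by (simp add: sum.If_cases)
  finally have "U3 \<phi> = 1" unfolding U3_cc cL by simp
  moreover have "norm2 \<phi> = 1" unfolding norm2_one by (rule un)
  ultimately show "stabilizer_state \<phi>" unfolding stabilizer_state_def by simp
  show "stabLag \<phi> = L" by (rule stabLag_eq[OF L ind])
qed


lemma proj_id:
  fixes \<psi> f :: "('n::finite) f2vec \<Rightarrow> complex"
  assumes out: "\<And>u. u \<notin> L \<Longrightarrow> cc \<psi> u = 0"
  shows "(\<Sum>u\<in>L. ip (W u f) f * cnj (cc \<psi> u)) = of_nat CARD('n f2vec) * ip f \<psi> * ip \<psi> f"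
proof -
  have "(\<Sum>u\<in>UNIV. ip (W u f) f * cnj (ip (W u \<psi>) \<psi>)) = of_nat CARD('n f2vec) * ip f \<psi> * ip \<psi> f"
    by (rule polar)
  moreover have "(\<Sum>u\<in>UNIV. ip (W u f) f * cnj (cc \<psi> u)) = (\<Sum>u\<in>L. ip (W u f) f * cnj (cc \<psi> u))"
    by (rule sum.mono_neutral_right) (auto simp: out)
  ultimately show ?thesis unfolding cc_def by simp
qed

definition sg :: "('n::finite) f2vec \<times> 'n f2vec \<Rightarrow> 'n f2vec \<times> 'n f2vec \<Rightarrow> complex" where
  "sg u v = (if sympl u v then -1 else 1)"

lemma sg_chr: "sg w v = chr (fst w) (snd v) * chr (snd w) (fst v)"
  unfolding sg_def sympl_def chr_def by auto

lemma sg_mult: "sg u v * sg u' v = sg (padd u u') v"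
  unfolding sg_def sympl_padd1 by auto

lemma sg_cnj[simp]: "cnj (sg u v) = sg u v" unfolding sg_def by simp

lemma chr_sum2: "(\<Sum>x\<in>UNIV. chr b (x::('n::finite) f2vec)) = (if b = vzero then of_nat CARD('n f2vec) else 0)"
  using chr_sum[of b] by (simp add: chr_comm[of b])

lemma sg_sum:
  "(\<Sum>v\<in>UNIV. sg w v) = (if w = (vzero, vzero) then (of_nat CARD(('n::finite) f2vec))^2 else 0)"
  for w :: "('n::finite) f2vec \<times> 'n f2vec"
proof -
  have U: "(UNIV :: ('n f2vec \<times> 'n f2vec) set) = UNIV \<times> UNIV" by simp
  have "(\<Sum>c\<in>UNIV. \<Sum>d\<in>UNIV. chr (snd w) c * chr (fst w) d)
      = (\<Sum>v\<in>UNIV \<times> UNIV. chr (snd w) (fst v) * chr (fst w) (snd v))"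
    unfolding sum.cartesian_product by (simp add: case_prod_beta)
  then have "(\<Sum>v\<in>UNIV. sg w v) = (\<Sum>c\<in>UNIV. \<Sum>d\<in>UNIV. chr (snd w) c * chr (fst w) d)"
    unfolding sg_chr U by (simp add: mult_ac)
  also have "\<dots> = (\<Sum>c\<in>UNIV. chr (snd w) c) * (\<Sum>d\<in>UNIV. chr (fst w) d)"
    by (simp add: sum_product)
  also have "\<dots> = (if w = (vzero, vzero) then (of_nat CARD('n f2vec))^2 else 0)"
    unfolding chr_sum2 by (cases w) (auto simp: power2_eq_square)
  finally show ?thesis .
qed

lemma sq_sum_sg:
  fixes X :: "('n::finite) f2vec \<times> 'n f2vec \<Rightarrow> complex"
  shows "(\<Sum>v\<in>UNIV. (\<Sum>u\<in>L. sg u v * X u) * cnj (\<Sum>u\<in>L. sg u v * X u))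
       = (of_nat CARD('n f2vec))^2 * (\<Sum>u\<in>L. X u * cnj (X u))"
proof -
  have fL: "finite L" by simp
  have "(\<Sum>v\<in>UNIV. (\<Sum>u\<in>L. sg u v * X u) * cnj (\<Sum>u\<in>L. sg u v * X u))
      = (\<Sum>v\<in>UNIV. \<Sum>u\<in>L. \<Sum>u'\<in>L. (sg u v * X u) * cnj (sg u' v * X u'))"
    by (simp only: cnj_sum sum_product)
  also have "\<dots> = (\<Sum>u\<in>L. \<Sum>v\<in>UNIV. \<Sum>u'\<in>L. (sg u v * X u) * cnj (sg u' v * X u'))"
    by (rule sum.swap)
  also have "\<dots> = (\<Sum>u\<in>L. \<Sum>u'\<in>L. \<Sum>v\<in>UNIV. (sg u v * X u) * cnj (sg u' v * X u'))"
    by (rule sum.cong[OF refl], rule sum.swap)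
  also have "\<dots> = (\<Sum>u\<in>L. \<Sum>u'\<in>L. (X u * cnj (X u')) * (\<Sum>v\<in>UNIV. sg (padd u u') v))"
    by (rule sum.cong[OF refl], rule sum.cong[OF refl])
       (simp add: sum_distrib_left sg_mult[symmetric] mult_ac)
  also have "\<dots> = (\<Sum>u\<in>L. \<Sum>u'\<in>L. if u' = u then (X u * cnj (X u')) * (of_nat CARD('n f2vec))^2 else 0)"
    by (rule sum.cong[OF refl], rule sum.cong[OF refl]) (auto simp: sg_sum padd_eq_zero_iff)
  also have "\<dots> = (\<Sum>u\<in>L. (X u * cnj (X u)) * (of_nat CARD('n f2vec))^2)"
    by (rule sum.cong[OF refl]) (simp add: sum.delta[OF fL])
  also have "\<dots> = (of_nat CARD('n f2vec))^2 * (\<Sum>u\<in>L. X u * cnj (X u))"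
    by (simp add: sum_distrib_left mult_ac)
  finally show ?thesis .
qed

lemma cnj_ratio:
  assumes "k1 * cnj k2 = 1" and "cmod k2 = 1"
  shows "k1 = k2"
proof -
  have "k2 * cnj k2 = 1" using assms(2) unfolding mult_cnj_real by simp
  then have "k1 = k1 * (k2 * cnj k2)" by simp
  also have "\<dots> = k2 * (k1 * cnj k2)" by (simp add: mult_ac)
  finally show ?thesis using assms(1) by simp
qed

lemma ip_self_mod: "ip f g * ip g f = of_real ((cmod (ip f g))^2)"
  using mult_cnj_real[of "ip f g"] ip_cnj[of f g] by simp


theorem lemma2p18:
  fixes f :: "('n::finite) f2vec \<Rightarrow> complex"
    and L :: "('n f2vec \<times> 'n f2vec) set"
  assumes "f \<noteq> (\<lambda>x. 0)"
    and "lagrangian L"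
  shows "\<exists>\<phi>. stabilizer_state \<phi> \<and> stabLag \<phi> = L \<and>
           (\<forall>\<psi>. stabilizer_state \<psi> \<and> stabLag \<psi> = L \<longrightarrow>
              cmod (ip f \<psi>) \<le> cmod (ip f \<phi>)) \<and>
           PfL f L \<le> (cmod (ip f \<phi>) / norm2 f)^2"
proof -
  note f0 = assms(1) and Lag = assms(2)
  define N where "N = CARD('n f2vec)"
  have Npos: "N > 0" unfolding N_def by simp
  have isoL: "isotropic L" using Lag unfolding lagrangian_def by simp
  obtain h :: "'n f2vec \<Rightarrow> complex" where h: "h \<noteq> (\<lambda>x. 0)" "JE L h"
    using je_exists[OF isoL] by blast
  obtain \<phi>0 where u0: "ip \<phi>0 \<phi>0 = 1" and je0: "JE L \<phi>0" using je_normalize[OF h] by blast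
  note P0 = je_props[OF Lag u0 je0]
  define \<Phi> where "\<Phi> v = W v \<phi>0" for v
  have uPhi: "ip (\<Phi> v) (\<Phi> v) = 1" for v unfolding \<Phi>_def ip_W_W u0 ..
  have eigPhi: "W u (\<Phi> v) = (\<lambda>x. (sg u v * cc \<phi>0 u) * \<Phi> v x)" if uL: "u \<in> L" for u v
  proof (rule ext)
    fix x
    have "W u (\<Phi> v) x = sg u v * W v (W u \<phi>0) x" unfolding \<Phi>_def sg_def by (rule W_commute)
    also have "\<dots> = (sg u v * cc \<phi>0 u) * \<Phi> v x" unfolding P0(2)[OF uL] W_scale \<Phi>_def by simp
    finally show "W u (\<Phi> v) x = (sg u v * cc \<phi>0 u) * \<Phi> v x" .
  qed
  have jePhi: "JE L (\<Phi> v)" for v unfolding JE_def using eigPhi by blast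
  note PP = je_props[OF Lag uPhi jePhi]
  have ccPhi_in: "cc (\<Phi> v) u = sg u v * cc \<phi>0 u" if "u \<in> L" for u v
    by (rule cc_eig(1)[OF uPhi eigPhi[OF that]])
  have ccPhi_out: "cc (\<Phi> v) u = 0" if "u \<notin> L" for u v
    using PP(1)[of v u] that by simp
  have cc0_out: "cc \<phi>0 u = 0" if "u \<notin> L" for u
    using P0(1)[of u] that by simp
  have cc0_in: "cmod (cc \<phi>0 u) = 1" if "u \<in> L" for u
    using P0(1)[of u] that by simp
  define F where "F v = cmod (ip f (\<Phi> v))" for v
  define M where "M = Max (range F)"
  have "M \<in> range F" unfolding M_def by (rule Max_in) auto
  then obtain vs where vs: "F vs = M" by auto
  have Fle: "F v \<le> F vs" for v unfolding vs M_def by (rule Max_ge) auto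
  define \<phi> where "\<phi> = \<Phi> vs"
  have st: "stabilizer_state \<phi>" and sL: "stabLag \<phi> = L" unfolding \<phi>_def using PP(4,5) by auto
  have maxp: "cmod (ip f \<psi>) \<le> cmod (ip f \<phi>)" if "stabilizer_state \<psi>" "stabLag \<psi> = L" for \<psi>
  proof -
    note SP = stab_props[OF that(1)]
    define S where "S = {u. cmod (cc \<psi> u) = 1}"
    have SL: "S = L" using SP(4) that(2) unfolding S_def by simp
    have upsi: "ip \<psi> \<psi> = 1" by (rule SP(1))
    have psi_out: "cc \<psi> u = 0" if "u \<notin> L" for u using SP(2)[of u] that SL unfolding S_def by simp
    have psi_in: "cmod (cc \<psi> u) = 1" if "u \<in> L" for u using SP(2)[of u] that SL unfolding S_def by simp
    have psi_eig: "W u \<psi> = (\<lambda>x. cc \<psi> u * \<psi> x)" if "u \<in> L" for u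
      using SP(5)[of u] that SL unfolding S_def by simp
    have "(\<Sum>v\<in>UNIV. ip (W v \<phi>0) \<psi> * cnj (ip (W v \<phi>0) \<psi>)) = of_nat CARD('n f2vec) * ip \<phi>0 \<phi>0 * ip \<psi> \<psi>"
      by (rule polar)
    then have "(\<Sum>v\<in>UNIV. ip (\<Phi> v) \<psi> * cnj (ip (\<Phi> v) \<psi>)) \<noteq> 0"
      unfolding u0 upsi \<Phi>_def by simp
    then obtain v where v: "ip (\<Phi> v) \<psi> \<noteq> 0" by (metis (mono_tags, lifting) mult_zero_left sum.neutral)
    have same: "cc (\<Phi> v) u = cc \<psi> u" for u
    proof (cases "u \<in> L")
      case True
      have "ip (\<Phi> v) \<psi> = ip (W u (\<Phi> v)) (W u \<psi>)" by (rule ip_W_W[symmetric])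
      also have "\<dots> = (cc (\<Phi> v) u * cnj (cc \<psi> u)) * ip (\<Phi> v) \<psi>"
        unfolding PP(2)[OF True] psi_eig[OF True] ip_scale1 ip_scale2 by (simp add: mult_ac)
      finally have "cc (\<Phi> v) u * cnj (cc \<psi> u) = 1" using v by simp
      then show ?thesis by (rule cnj_ratio) (rule psi_in[OF True])
    next
      case False
      then show ?thesis using ccPhi_out psi_out by simp
    qed
    have "of_nat CARD('n f2vec) * ip f \<psi> * ip \<psi> f = (\<Sum>u\<in>L. ip (W u f) f * cnj (cc \<psi> u))"
      by (rule proj_id[symmetric]) (rule psi_out)
    also have "\<dots> = (\<Sum>u\<in>L. ip (W u f) f * cnj (cc (\<Phi> v) u))" unfolding same ..
    also have "\<dots> = of_nat CARD('n f2vec) * ip f (\<Phi> v) * ip (\<Phi> v) f"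
      by (rule proj_id) (rule ccPhi_out)
    finally have "ip f \<psi> * ip \<psi> f = ip f (\<Phi> v) * ip (\<Phi> v) f" by (simp add: mult.assoc)
    then have "(of_real ((cmod (ip f \<psi>))^2) :: complex) = of_real ((cmod (ip f (\<Phi> v)))^2)"
      unfolding ip_self_mod .
    then have "(cmod (ip f \<psi>))^2 = (F v)^2" unfolding F_def by (simp only: of_real_eq_iff)
    then have "cmod (ip f \<psi>) = F v" unfolding F_def by (simp add: power2_eq_iff_nonneg)
    also have "\<dots> \<le> F vs" by (rule Fle)
    finally show ?thesis unfolding F_def \<phi>_def .
  qed
  define X where "X u = ip (W u f) f * cnj (cc \<phi>0 u)" for u
  have Xv: "of_nat N * of_real ((F v)^2) = (\<Sum>u\<in>L. sg u v * X u)" for v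
  proof -
    have "of_nat N * of_real ((F v)^2) = of_nat N * (ip f (\<Phi> v) * ip (\<Phi> v) f)"
      unfolding F_def ip_self_mod ..
    also have "\<dots> = of_nat CARD('n f2vec) * ip f (\<Phi> v) * ip (\<Phi> v) f"
      unfolding N_def by (simp only: mult.assoc)
    also have "\<dots> = (\<Sum>u\<in>L. ip (W u f) f * cnj (cc (\<Phi> v) u))"
      by (rule proj_id[symmetric]) (rule ccPhi_out)
    also have "\<dots> = (\<Sum>u\<in>L. sg u v * X u)"
      by (rule sum.cong[OF refl]) (simp add: ccPhi_in X_def mult_ac)
    finally show ?thesis .
  qed
  have A: "(\<Sum>v\<in>UNIV. (\<Sum>u\<in>L. sg u v * X u) * cnj (\<Sum>u\<in>L. sg u v * X u))
       = (of_nat N)^2 * (\<Sum>u\<in>L. X u * cnj (X u))" unfolding N_def by (rule sq_sum_sg)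
  have B: "(\<Sum>v\<in>UNIV. (\<Sum>u\<in>L. sg u v * X u) * cnj (\<Sum>u\<in>L. sg u v * X u))
       = (of_nat N)^2 * of_real (\<Sum>v\<in>UNIV. (F v)^4)"
  proof -
    have "(\<Sum>v\<in>UNIV. (\<Sum>u\<in>L. sg u v * X u) * cnj (\<Sum>u\<in>L. sg u v * X u))
        = (\<Sum>v\<in>UNIV. (of_nat N)^2 * of_real ((F v)^4))"
    proof (rule sum.cong[OF refl])
      fix v
      have "(of_nat N * of_real ((F v)^2)) * cnj (of_nat N * of_real ((F v)^2))
          = ((of_nat N)^2 * of_real ((F v)^4) :: complex)"
        by (simp add: power2_eq_square power4_eq_xxxx)
      then show "(\<Sum>u\<in>L. sg u v * X u) * cnj (\<Sum>u\<in>L. sg u v * X u) = (of_nat N)^2 * of_real ((F v)^4)"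
        unfolding Xv .
    qed
    also have "\<dots> = (of_nat N)^2 * of_real (\<Sum>v\<in>UNIV. (F v)^4)"
      by (simp add: sum_distrib_left of_real_sum)
    finally show ?thesis .
  qed
  have C: "(\<Sum>u\<in>L. X u * cnj (X u)) = of_real (\<Sum>u\<in>L. (cmod (ip (W u f) f))^2)"
    unfolding of_real_sum
  proof (rule sum.cong[OF refl])
    fix u assume uL: "u \<in> L"
    have "X u * cnj (X u) = (ip (W u f) f * cnj (ip (W u f) f)) * (cc \<phi>0 u * cnj (cc \<phi>0 u))"
      unfolding X_def by (simp add: mult_ac)
    also have "\<dots> = of_real ((cmod (ip (W u f) f))^2)"
      unfolding mult_cnj_real cc0_in[OF uL] by simp
    finally show "X u * cnj (X u) = of_real ((cmod (ip (W u f) f))^2)" .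
  qed
  have "(of_nat N)^2 * (of_real (\<Sum>v\<in>UNIV. (F v)^4) :: complex)
      = (of_nat N)^2 * of_real (\<Sum>u\<in>L. (cmod (ip (W u f) f))^2)"
    unfolding B[symmetric] A C ..
  then have Q4: "(\<Sum>u\<in>L. (cmod (ip (W u f) f))^2) = (\<Sum>v\<in>UNIV. (F v)^4)"
    using Npos by (simp only: mult_cancel_left of_real_eq_iff) simp
  define R where "R = Re (ip f f)"
  have "(\<Sum>v\<in>UNIV. ip (W v \<phi>0) f * cnj (ip (W v \<phi>0) f)) = of_nat CARD('n f2vec) * ip \<phi>0 \<phi>0 * ip f f"
    by (rule polar)
  then have "of_real (\<Sum>v\<in>UNIV. (F v)^2) = (of_nat N * of_real R :: complex)"
  proof -
    assume a: "(\<Sum>v\<in>UNIV. ip (W v \<phi>0) f * cnj (ip (W v \<phi>0) f)) = of_nat CARD('n f2vec) * ip \<phi>0 \<phi>0 * ip f f"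
    have "(\<Sum>v\<in>UNIV. ip (W v \<phi>0) f * cnj (ip (W v \<phi>0) f)) = of_real (\<Sum>v\<in>UNIV. (F v)^2)"
      unfolding of_real_sum F_def mult_cnj_real \<Phi>_def
      by (rule sum.cong[OF refl]) (metis complex_mod_cnj ip_cnj)
    moreover have "ip f f = of_real R" unfolding R_def by (rule ip_self_real)
    ultimately show ?thesis using a u0 unfolding N_def by simp
  qed
  then have S2: "(\<Sum>v\<in>UNIV. (F v)^2) = real N * R"
    by (metis of_real_eq_iff of_real_mult of_real_of_nat_eq)
  have "(\<Sum>v\<in>UNIV. (F v)^4) \<le> (\<Sum>v\<in>UNIV. (F vs)^2 * (F v)^2)"
  proof (rule sum_mono)
    fix v
    have "(F v)^2 \<le> (F vs)^2" using Fle[of v] by (rule power_mono) (simp add: F_def)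
    then have "(F v)^2 * (F v)^2 \<le> (F vs)^2 * (F v)^2" by (rule mult_right_mono) simp
    then show "(F v)^4 \<le> (F vs)^2 * (F v)^2" by (simp only: sq4)
  qed
  also have "\<dots> = (F vs)^2 * (real N * R)" unfolding sum_distrib_left[symmetric] S2 ..
  finally have Qb: "(\<Sum>u\<in>L. (cmod (ip (W u f) f))^2) \<le> (F vs)^2 * (real N * R)" unfolding Q4 .
  have "ip f f \<noteq> 0" using f0 ip_self_eq0 by blast
  then have Rpos: "R > 0"
  proof -
    assume nz: "ip f f \<noteq> 0"
    have "R \<ge> 0" unfolding R_def by (rule ip_self_nonneg)
    moreover have "R \<noteq> 0"
    proof
      assume "R = 0"
      then have "ip f f = of_real 0" unfolding R_def by (subst ip_self_real) simp
      then show False using nz by simp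
    qed
    ultimately show ?thesis by simp
  qed
  have nf2: "(norm2 f)^2 = R" unfolding norm2_def R_def using ip_self_nonneg[of f] by simp
  have nf4: "(norm2 f)^4 = R^2" using nf2 by (simp add: sq4 power2_eq_square)
  have PfL_eq: "PfL f L = (\<Sum>u\<in>L. (cmod (ip (W u f) f))^2) / (real N * R^2)"
  proof -
    have "PfL f L = (\<Sum>u\<in>L. (cmod (ip (W u f) f))^2 / (2 ^ CARD('n) * (norm2 f)^4))"
      unfolding PfL_def Pf_def by (rule sum.cong[OF refl]) (auto simp: fhat_Delta)
    also have "\<dots> = (\<Sum>u\<in>L. (cmod (ip (W u f) f))^2) / (real N * R^2)"
      unfolding sum_divide_distrib[symmetric] nf4 N_def card_vec by simp
    finally show ?thesis .
  qed
  have ineq: "PfL f L \<le> (cmod (ip f \<phi>) / norm2 f)^2"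
  proof -
    have "PfL f L \<le> (F vs)^2 * (real N * R) / (real N * R^2)"
      unfolding PfL_eq by (rule divide_right_mono[OF Qb]) (use Npos Rpos in simp)
    also have "\<dots> = (F vs)^2 / R" using Npos Rpos by (simp add: power2_eq_square field_simps)
    also have "\<dots> = (cmod (ip f \<phi>) / norm2 f)^2" unfolding power_divide nf2 F_def \<phi>_def ..
    finally show ?thesis .
  qed
  show ?thesis using st sL maxp ineq by blast
qed


end
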